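(* Consider the RHC closed-loop system described in the context. Assume that $A$ is Schur stable, i.e. all eigenvalues of $A$ have modulus strictly less than $1$. Assume also that $\mathbb{E}\bigl[\bar\varphi(\bar F\bar w)\bigr]=0$ for every initial condition. Then the closed loop satisfies $$\sup_{t\in\mathbb{N}_0}\mathbb{E}_{x_0}\bigl[\|x_t\|^2\bigr]<\infty.$$
   Context: **System.** Consider the discrete-time system $x_{t+1}=Ax_t+Bu_t+Fw_t+r$ for $t\in\mathbb{N}_0$. The data are: - $x_t\in\mathbb{R}^n$, $u_t\in\mathbb{R}^m$ and $w_t\in\mathbb{R}^n$; - known matrices $A$, $B$, $F$ and a known vector $r$; - a given initial state $x_0$; - i.i.d. noise vectors $w_t$, possibly with unbounded support, with mean $\mu_w$ and finite covariance $\Sigma_w$; - the input constraint $\|u_t\|_\infty\le U_{\max}$, where $U_{\max}>0$. **Stacked notation.** Fix a horizon $N\in\mathbb{N}$. Define - $\bar x=(x_0^\mathsf{T},\dots,x_N^\mathsf{T})^\mathsf{T}$, $\bar u=(u_0^\mathsf{T},\dots,u_{N-1}^\mathsf{T})^\mathsf{T}$, $\bar w=(w_0^\mathsf{T},\dots,w_{N-1}^\mathsf{T})^\mathsf{T}$, and $\bar r=(r^\mathsf{T},\dots,r^\mathsf{T})^\mathsf{T}\in\mathbb{R}^{Nn}$; - $\bar F=\operatorname{diag}(F,\dots,F)$ and $\bar A=(I,A^\mathsf{T},\dots,(A^N)^\mathsf{T})^\mathsf{T}$; - $\bar B$ is the block matrix with blocks $A^{k-1-j}B$ for $j<k$ and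 $0$ otherwise ($k=0,\dots,N$, $j=0,\dots,N-1$); - $\bar D$ is the block matrix with blocks $A^{k-1-j}$ for $j<k$ and $0$ otherwise. Then $\bar x=\bar Ax_0+\bar B\bar u+\bar D\bar F\bar w+\bar D\bar r$. Let $Q_0,\dots,Q_N$ and $R_0,\dots,R_{N-1}$ be symmetric positive definite, and set $\bar Q=\operatorname{diag}(Q_0,\dots,Q_N)$ and $\bar R=\operatorname{diag}(R_0,\dots,R_{N-1})$. **Saturated noise measurements.** Let $0<\phi_{\max}\le U_{\max}$, and let $\varphi_i^j:\mathbb{R}\to\mathbb{R}$ ($i=0,\dots,N-1$, $j=1,\dots,n$) be functions bounded in absolute value by $\phi_{\max}$. Set $\varphi_i(Fw_i)=(\varphi_i^1(F_1w_i),\dots,\varphi_i^n(F_nw_i))^\mathsf{T}$, with $F_j$ the $j$-th row of $F$, and $\bar\varphi(\bar F\bar w)=(\varphi_0(Fw_0)^\mathsf{T},\dots,\varphi_{N-1}(Fw_{N-1})^\mathsf{T})^\mathsf{T}$. **Finite-horizon problem.** For a given initial state $x$, the finite-horizon problem is to minimize $\mathbb{E}_{x}[\bar x^\mathsf{T}\bar Q\bar x+\bar u^\mathsf{T}\bar R\bar u]$, with $x_0=x$, over policies $\bar u=\bar G\bar\varphi(\bar F\bar w)+\bar d$. Here $\bar d\in\mathbb{R}^{Nm}$, and $\bar G\in\mathbb{R}^{Nm\times Nn}$ is strictly block lower triangular with $m\times n$ blocks $G_{t,i}$ ($i<t$). The constraint is $|\bar d_i|+\|\bar G_i\|_1\phi_{\max}\le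 U_{\max}$ for $i=1,\dots,Nm$, where $\bar G_i$ is the $i$-th row of $\bar G$. **RHC closed loop.** At each time $kN$ ($k\in\mathbb{N}_0$), the finite-horizon problem is solved with initial state $x_{kN}$, giving an optimal solution $(\bar G^*_{kN},\bar d^*_{kN})$ that depends on $x_{kN}$. The whole resulting input sequence is then applied over the next $N$ steps. That is, for $\ell=0,\dots,N-1$, $$(u_{kN}^\mathsf{T},\dots,u_{kN+N-1}^\mathsf{T})^\mathsf{T}=\bar G^*_{kN}\,\bar\varphi\bigl(\bar F\,(w_{kN}^\mathsf{T},\dots,w_{kN+N-1}^\mathsf{T})^\mathsf{T}\bigr)+\bar d^*_{kN},$$ and the state evolves by $x_{t+1}=Ax_t+Bu_t+Fw_t+r$. *)

theory Defs
  imports "HOL-Probability.Probability"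
begin

text \<open>Eigenvalues of a real square matrix are taken over the complex numbers:
  c is an eigenvalue of A iff A v = c v for some nonzero complex vector v.\<close>
definition schur_stable :: "real^'n^'n \<Rightarrow> bool" where
  "schur_stable A \<longleftrightarrow>
     (\<forall>(c::complex) (v::complex^'n). v \<noteq> 0 \<and>
        (\<chi> i. \<Sum>j\<in>UNIV. complex_of_real (A$i$j) * v$j) = c *s v \<longrightarrow> cmod c < 1)"

definition sym_pos_def :: "real^'n^'n \<Rightarrow> bool" where
  "sym_pos_def Q \<longleftrightarrow> transpose Q = Q \<and> (\<forall>v. v \<noteq> 0 \<longrightarrow> v \<bullet> (Q *v v) > 0)"

definition phi_vec ::
  "(nat \<Rightarrow> 'n \<Rightarrow> real \<Rightarrow> real) \<Rightarrow> real^'n^'n \<Rightarrow> nat \<Rightarrow> real^'n \<Rightarrow> real^'n" where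
  "phi_vec \<phi> F i wv = (\<chi> j. \<phi> i j ((F *v wv) $ j))"

text \<open>Input at step l of a horizon under the policy u = G phi(F w) + d, where
  G l i is the (l,i) block of the strictly block lower triangular gain
  (only blocks with i < l are used) and ws i is the i-th noise of the horizon.\<close>
definition pol_input ::
  "(nat \<Rightarrow> 'n \<Rightarrow> real \<Rightarrow> real) \<Rightarrow> real^'n^'n \<Rightarrow> (nat \<Rightarrow> nat \<Rightarrow> real^'n^'m) \<Rightarrow>
   (nat \<Rightarrow> real^'m) \<Rightarrow> (nat \<Rightarrow> real^'n) \<Rightarrow> nat \<Rightarrow> real^'m" where
  "pol_input \<phi> F G d ws l = (\<Sum>i<l. G l i *v phi_vec \<phi> F i (ws i)) + d l"

fun traj ::
  "real^'n^'n \<Rightarrow> real^'m^'n \<Rightarrow> real^'n^'n \<Rightarrow> real^'n \<Rightarrow> (nat \<Rightarrow> 'n \<Rightarrow> real \<Rightarrow> real) \<Rightarrow>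
   (nat \<Rightarrow> nat \<Rightarrow> real^'n^'m) \<Rightarrow> (nat \<Rightarrow> real^'m) \<Rightarrow> real^'n \<Rightarrow> (nat \<Rightarrow> real^'n) \<Rightarrow>
   nat \<Rightarrow> real^'n" where
  "traj A B F r \<phi> G d x ws 0 = x"
| "traj A B F r \<phi> G d x ws (Suc l) =
     A *v traj A B F r \<phi> G d x ws l + B *v pol_input \<phi> F G d ws l + F *v ws l + r"

definition admissible ::
  "nat \<Rightarrow> real \<Rightarrow> real \<Rightarrow> (nat \<Rightarrow> nat \<Rightarrow> real^'n^'m) \<Rightarrow> (nat \<Rightarrow> real^'m) \<Rightarrow> bool" where
  "admissible N \<phi>max Umax G d \<longleftrightarrow>
     (\<forall>l<N. \<forall>j. \<bar>d l $ j\<bar> + (\<Sum>i<l. \<Sum>k\<in>UNIV. \<bar>G l i $ j $ k\<bar>) * \<phi>max \<le> Umax)"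

definition fh_cost ::
  "'a measure \<Rightarrow> (nat \<Rightarrow> 'a \<Rightarrow> real^'n) \<Rightarrow> nat \<Rightarrow>
   real^'n^'n \<Rightarrow> real^'m^'n \<Rightarrow> real^'n^'n \<Rightarrow> real^'n \<Rightarrow> (nat \<Rightarrow> 'n \<Rightarrow> real \<Rightarrow> real) \<Rightarrow>
   (nat \<Rightarrow> real^'n^'n) \<Rightarrow> (nat \<Rightarrow> real^'m^'m) \<Rightarrow>
   real^'n \<Rightarrow> (nat \<Rightarrow> nat \<Rightarrow> real^'n^'m) \<Rightarrow> (nat \<Rightarrow> real^'m) \<Rightarrow> real" where
  "fh_cost M w N A B F r \<phi> Q R x G d =
     (\<integral>\<omega>. (\<Sum>k\<le>N. traj A B F r \<phi> G d x (\<lambda>i. w i \<omega>) k \<bullet>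
                    (Q k *v traj A B F r \<phi> G d x (\<lambda>i. w i \<omega>) k))
          + (\<Sum>k<N. pol_input \<phi> F G d (\<lambda>i. w i \<omega>) k \<bullet>
                    (R k *v pol_input \<phi> F G d (\<lambda>i. w i \<omega>) k)) \<partial>M)"

definition fh_optimal where
  "fh_optimal M w N A B F r \<phi> Q R \<phi>max Umax x G d \<longleftrightarrow>
     admissible N \<phi>max Umax G d \<and>
     (\<forall>G' d'. admissible N \<phi>max Umax G' d' \<longrightarrow>
        fh_cost M w N A B F r \<phi> Q R x G d \<le> fh_cost M w N A B F r \<phi> Q R x G' d')"

text \<open>RHC closed loop. sel x = (G*, d*) is the chosen optimal solution for
  initial state x. Block-start states (times kN):\<close>
fun rhc_block ::
  "nat \<Rightarrow> real^'n^'n \<Rightarrow> real^'m^'n \<Rightarrow> real^'n^'n \<Rightarrow> real^'n \<Rightarrow> (nat \<Rightarrow> 'n \<Rightarrow> real \<Rightarrow> real) \<Rightarrow>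
   (real^'n \<Rightarrow> (nat \<Rightarrow> nat \<Rightarrow> real^'n^'m) \<times> (nat \<Rightarrow> real^'m)) \<Rightarrow> real^'n \<Rightarrow>
   (nat \<Rightarrow> real^'n) \<Rightarrow> nat \<Rightarrow> real^'n" where
  "rhc_block N A B F r \<phi> sel x0 ws 0 = x0"
| "rhc_block N A B F r \<phi> sel x0 ws (Suc k) =
     (let xk = rhc_block N A B F r \<phi> sel x0 ws k
      in traj A B F r \<phi> (fst (sel xk)) (snd (sel xk)) xk (\<lambda>i. ws (k * N + i)) N)"

definition rhc_state ::
  "nat \<Rightarrow> real^'n^'n \<Rightarrow> real^'m^'n \<Rightarrow> real^'n^'n \<Rightarrow> real^'n \<Rightarrow> (nat \<Rightarrow> 'n \<Rightarrow> real \<Rightarrow> real) \<Rightarrow>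
   (real^'n \<Rightarrow> (nat \<Rightarrow> nat \<Rightarrow> real^'n^'m) \<times> (nat \<Rightarrow> real^'m)) \<Rightarrow> real^'n \<Rightarrow>
   (nat \<Rightarrow> real^'n) \<Rightarrow> nat \<Rightarrow> real^'n" where
  "rhc_state N A B F r \<phi> sel x0 ws t =
     (let k = t div N; xk = rhc_block N A B F r \<phi> sel x0 ws k
      in traj A B F r \<phi> (fst (sel xk)) (snd (sel xk)) xk (\<lambda>i. ws (k * N + i)) (t mod N))"

end

theory Submission
  imports Defs "Jordan_Normal_Form.Spectral_Radius"
begin

no_notation Matrix.vec_index (infixl "$" 100)
notation Matrix.vec_index (infixl "$v" 100)

fun mp :: "real^'n^'n \<Rightarrow> nat \<Rightarrow> real^'n^'n" where
  "mp A 0 = Finite_Cartesian_Product.mat 1"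
| "mp A (Suc k) = mp A k ** A"

lemma smult_pow_mat:
  assumes "(C :: complex Matrix.mat) \<in> carrier_mat n n"
  shows "(l \<cdot>\<^sub>m C) ^\<^sub>m k = (l ^ k) \<cdot>\<^sub>m (C ^\<^sub>m k)"
proof (induction k)
  case 0
  then show ?case using assms by (auto intro!: eq_matI)
next
  case (Suc k)
  have c1: "C ^\<^sub>m k \<in> carrier_mat n n" using assms by auto
  have "(l \<cdot>\<^sub>m C) ^\<^sub>m Suc k = (l ^ k \<cdot>\<^sub>m C ^\<^sub>m k) * (l \<cdot>\<^sub>m C)" using Suc by simp
  also have "\<dots> = l ^ k \<cdot>\<^sub>m (C ^\<^sub>m k * (l \<cdot>\<^sub>m C))"
    using mult_smult_assoc_mat[OF c1, of "l \<cdot>\<^sub>m C"] assms by auto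
  also have "\<dots> = l ^ k \<cdot>\<^sub>m (l \<cdot>\<^sub>m (C ^\<^sub>m k * C))"
    using mult_smult_distrib[OF c1 assms] by simp
  also have "\<dots> = (l ^ Suc k) \<cdot>\<^sub>m (C ^\<^sub>m Suc k)"
    by (auto intro!: eq_matI)
  finally show ?case .
qed

lemma eig_smult:
  assumes C: "(C :: complex Matrix.mat) \<in> carrier_mat n n" and l: "l \<noteq> 0"
    and e: "eigenvalue (l \<cdot>\<^sub>m C) mu"
  shows "eigenvalue C (mu / l)"
proof -
  obtain v where v: "v \<in> carrier_vec n" "v \<noteq> 0\<^sub>v n" "(l \<cdot>\<^sub>m C) *\<^sub>v v = mu \<cdot>\<^sub>v v"
    using e C unfolding eigenvalue_def eigenvector_def by auto
  have "C *\<^sub>v v = (mu / l) \<cdot>\<^sub>v v"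
  proof (rule eq_vecI)
    fix i assume i: "i < dim_vec ((mu / l) \<cdot>\<^sub>v v)"
    hence i': "i < n" using v by auto
    have "((l \<cdot>\<^sub>m C) *\<^sub>v v) $v i = (mu \<cdot>\<^sub>v v) $v i" using v by simp
    moreover have "((l \<cdot>\<^sub>m C) *\<^sub>v v) $v i = l * (C *\<^sub>v v) $v i"
      using i' C v(1) by (auto simp: scalar_prod_def sum_distrib_left mult.assoc)
    ultimately have "l * (C *\<^sub>v v) $v i = mu * v $v i" using i' v by simp
    thus "(C *\<^sub>v v) $v i = ((mu / l) \<cdot>\<^sub>v v) $v i" using i' v l
      by (auto simp: field_simps)
  qed (use v C in auto)
  thus ?thesis using v C unfolding eigenvalue_def eigenvector_def by auto
qed

lemma mp_Suc': "mp A (Suc k) = A ** mp A k"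
proof (induction k)
  case 0
  then show ?case by simp
next
  case (Suc k)
  have "mp A (Suc (Suc k)) = (A ** mp A k) ** A" using Suc by simp
  also have "\<dots> = A ** mp A (Suc k)" by (simp add: matrix_mul_assoc)
  finally show ?case .
qed

lemma mv_sum: "(A::real^'a^'b) *v (\<Sum>s\<in>S. f s) = (\<Sum>s\<in>S. A *v f s)"
  using linear_sum[OF matrix_vector_mul_linear[of A]] by simp

lemma mat_vec_bound:
  fixes M :: "real^'a^'b"
  shows "norm (M *v v) \<le> (\<Sum>i\<in>UNIV. \<Sum>j\<in>UNIV. \<bar>M$i$j\<bar>) * norm v"
proof -
  have "norm (M *v v) \<le> (\<Sum>i\<in>UNIV. \<bar>(M *v v)$i\<bar>)" by (rule norm_le_l1_cart)
  also have "\<dots> \<le> (\<Sum>i\<in>UNIV. \<Sum>j\<in>UNIV. \<bar>M$i$j\<bar> * norm v)"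
  proof (rule sum_mono)
    fix i
    have "\<bar>(M *v v)$i\<bar> = \<bar>\<Sum>j\<in>UNIV. M$i$j * v$j\<bar>" by (simp add: matrix_vector_mult_def)
    also have "\<dots> \<le> (\<Sum>j\<in>UNIV. \<bar>M$i$j * v$j\<bar>)" by (rule sum_abs)
    also have "\<dots> \<le> (\<Sum>j\<in>UNIV. \<bar>M$i$j\<bar> * norm v)"
      by (intro sum_mono) (simp add: abs_mult mult_left_mono component_le_norm_cart)
    finally show "\<bar>(M *v v)$i\<bar> \<le> (\<Sum>j\<in>UNIV. \<bar>M$i$j\<bar> * norm v)" .
  qed
  also have "\<dots> = (\<Sum>i\<in>UNIV. \<Sum>j\<in>UNIV. \<bar>M$i$j\<bar>) * norm v"
    by (simp add: sum_distrib_right)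
  finally show ?thesis .
qed

lemma lin_rec:
  fixes x :: "nat \<Rightarrow> real^'n"
  assumes "\<And>t. x (Suc t) = A *v x t + v t"
  shows "x t = mp A t *v x 0 + (\<Sum>s<t. mp A (t - 1 - s) *v v s)"
proof (induction t)
  case 0
  then show ?case by simp
next
  case (Suc t)
  have "x (Suc t) = A *v (mp A t *v x 0 + (\<Sum>s<t. mp A (t - 1 - s) *v v s)) + v t"
    using assms Suc by simp
  also have "\<dots> = mp A (Suc t) *v x 0 + (\<Sum>s<t. mp A (Suc (t - 1 - s)) *v v s) + v t"
    by (simp add: matrix_vector_right_distrib mv_sum matrix_vector_mul_assoc mp_Suc' del: mp.simps(2))
  finally have e1: "x (Suc t) = mp A (Suc t) *v x 0 + (\<Sum>s<t. mp A (Suc (t - 1 - s)) *v v s) + v t" .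
  have e2: "(\<Sum>s<t. mp A (Suc (t - 1 - s)) *v v s) = (\<Sum>s<t. mp A (Suc t - 1 - s) *v v s)"
    by (intro sum.cong) (auto simp: Suc_diff_Suc)
  have e3: "(\<Sum>s<Suc t. mp A (Suc t - 1 - s) *v v s) = (\<Sum>s<t. mp A (Suc t - 1 - s) *v v s) + v t"
    by simp
  show ?case using e1 e2 e3 by (simp add: add.assoc del: mp.simps(2))
qed

lemma input_bound:
  assumes adm: "admissible N \<phi>max Umax G d" and l: "l < N"
    and phi: "\<And>i j s. i < N \<Longrightarrow> \<bar>\<phi> i j s\<bar> \<le> \<phi>max"
  shows "norm (pol_input \<phi> F G d ws l :: real^'m) \<le> real CARD('m) * Umax"
proof -
  have comp: "\<bar>pol_input \<phi> F G d ws l $ j\<bar> \<le> Umax" for j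
  proof -
    have "pol_input \<phi> F G d ws l $ j = (\<Sum>i<l. \<Sum>k\<in>UNIV. G l i $ j $ k * phi_vec \<phi> F i (ws i) $ k) + d l $ j"
      by (simp add: pol_input_def matrix_vector_mult_def sum_component)
    hence "\<bar>pol_input \<phi> F G d ws l $ j\<bar> \<le> (\<Sum>i<l. \<Sum>k\<in>UNIV. \<bar>G l i $ j $ k * phi_vec \<phi> F i (ws i) $ k\<bar>) + \<bar>d l $ j\<bar>"
    proof -
      have h: "\<bar>\<Sum>i<l. \<Sum>k\<in>UNIV. G l i $ j $ k * phi_vec \<phi> F i (ws i) $ k\<bar> \<le> (\<Sum>i<l. \<Sum>k\<in>UNIV. \<bar>G l i $ j $ k * phi_vec \<phi> F i (ws i) $ k\<bar>)"
        by (rule order_trans[OF sum_abs sum_mono[OF sum_abs]])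
      show ?thesis using h \<open>pol_input \<phi> F G d ws l $ j = _\<close> abs_triangle_ineq[of "\<Sum>i<l. \<Sum>k\<in>UNIV. G l i $ j $ k * phi_vec \<phi> F i (ws i) $ k" "d l $ j"]
        by linarith
    qed
    also have "\<dots> \<le> (\<Sum>i<l. \<Sum>k\<in>UNIV. \<bar>G l i $ j $ k\<bar> * \<phi>max) + \<bar>d l $ j\<bar>"
      using l by (intro add_right_mono sum_mono) (auto simp: abs_mult phi_vec_def intro!: mult_left_mono phi)
    also have "\<dots> = \<bar>d l $ j\<bar> + (\<Sum>i<l. \<Sum>k\<in>UNIV. \<bar>G l i $ j $ k\<bar>) * \<phi>max"
      by (simp add: sum_distrib_right)
    also have "\<dots> \<le> Umax" using adm l unfolding admissible_def by blast
    finally show ?thesis .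
  qed
  have "norm (pol_input \<phi> F G d ws l) \<le> (\<Sum>j\<in>UNIV. \<bar>pol_input \<phi> F G d ws l $ j\<bar>)"
    by (rule norm_le_l1_cart)
  also have "\<dots> \<le> (\<Sum>j\<in>(UNIV::'m set). Umax)" by (intro sum_mono comp)
  finally show ?thesis by simp
qed

definition uin where
  "uin N A B F r \<phi> sel x0 ws t =
     (let k = t div N; xk = rhc_block N A B F r \<phi> sel x0 ws k
      in pol_input \<phi> F (fst (sel xk)) (snd (sel xk)) (\<lambda>i. ws (k * N + i)) (t mod N))"

lemma rhc_rec:
  assumes N: "N \<ge> 1"
  shows "rhc_state N A B F r \<phi> sel x0 ws (Suc t) =
    A *v rhc_state N A B F r \<phi> sel x0 ws t + B *v uin N A B F r \<phi> sel x0 ws t + F *v ws t + r"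
proof -
  define k where "k = t div N"
  define m where "m = t mod N"
  have t: "t = k * N + m" unfolding k_def m_def by simp
  have m: "m < N" unfolding m_def using N by simp
  consider (a) "Suc m < N" | (b) "Suc m = N" using m by linarith
  then show ?thesis
  proof cases
    case a
    have st: "Suc t = Suc m + k * N" using t by simp
    have N0: "N \<noteq> 0" using N by simp
    have d: "Suc t div N = k" "Suc t mod N = Suc m" unfolding st
      using a div_mult_self1[OF N0, of "Suc m" k] mod_mult_self1[of "Suc m" k N]
      by (simp_all del: div_mult_self1 mod_mult_self1 add: div_less mod_less)
    show ?thesis unfolding rhc_state_def uin_def Let_def d
      by (simp add: k_def[symmetric] m_def[symmetric] t[symmetric])
  next
    case b
    have st: "Suc t = 0 + Suc k * N" using t b by simp
    have N0: "N \<noteq> 0" using N by simp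
    have d: "Suc t div N = Suc k" "Suc t mod N = 0" unfolding st
      using div_mult_self1[OF N0, of 0 "Suc k"] mod_mult_self1[of 0 "Suc k" N]
      by (simp_all del: div_mult_self1 mod_mult_self1)
    have "rhc_state N A B F r \<phi> sel x0 ws (Suc t) = rhc_block N A B F r \<phi> sel x0 ws (Suc k)"
      unfolding rhc_state_def Let_def d by simp
    also have "\<dots> = traj A B F r \<phi> (fst (sel (rhc_block N A B F r \<phi> sel x0 ws k)))
         (snd (sel (rhc_block N A B F r \<phi> sel x0 ws k))) (rhc_block N A B F r \<phi> sel x0 ws k)
         (\<lambda>i. ws (k * N + i)) (Suc m)"
      using b by (simp add: Let_def)
    finally show ?thesis unfolding rhc_state_def uin_def Let_def
      by (simp add: k_def[symmetric] m_def[symmetric] t[symmetric])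
  qed
qed

lemma geo_bound:
  fixes \<rho> :: real
  assumes "0 \<le> \<rho>" "\<rho> < 1"
  shows "(\<Sum>s<t. \<rho> ^ (t - 1 - s)) \<le> 1 / (1 - \<rho>)"
proof -
  have "(\<Sum>s<t. \<rho> ^ (t - 1 - s)) = (\<Sum>s<t. \<rho> ^ (t - Suc s))" by simp
  also have "\<dots> = (\<Sum>s<t. \<rho> ^ s)" by (rule sum.nat_diff_reindex)
  also have "\<dots> = (1 - \<rho> ^ t) / (1 - \<rho>)" using assms by (simp add: sum_gp_strict)
  also have "\<dots> \<le> 1 / (1 - \<rho>)" using assms by (simp add: divide_right_mono)
  finally show ?thesis .
qed

lemma cs_weighted:
  fixes b y :: "nat \<Rightarrow> real"
  assumes "\<And>s. s \<in> S \<Longrightarrow> 0 \<le> b s"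
  shows "(\<Sum>s\<in>S. b s * y s)\<^sup>2 \<le> (\<Sum>s\<in>S. b s) * (\<Sum>s\<in>S. b s * (y s)\<^sup>2)"
proof -
  have "(\<Sum>s\<in>S. b s * y s) = (\<Sum>s\<in>S. sqrt (b s) * (sqrt (b s) * y s))"
    using assms by (intro sum.cong) (auto simp: mult.assoc[symmetric])
  hence "(\<Sum>s\<in>S. b s * y s)\<^sup>2 \<le> (\<Sum>s\<in>S. (sqrt (b s))\<^sup>2) * (\<Sum>s\<in>S. (sqrt (b s) * y s)\<^sup>2)"
    using Cauchy_Schwarz_ineq_sum by metis
  also have "\<dots> = (\<Sum>s\<in>S. b s) * (\<Sum>s\<in>S. b s * (y s)\<^sup>2)"
    using assms by (simp add: power_mult_distrib)
  finally show ?thesis .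
qed

lemma traj_bound:
  fixes A :: "real^'n^'n" and x :: "nat \<Rightarrow> real^'n" and u :: "nat \<Rightarrow> real^'m"
    and B :: "real^'m^'n" and F :: "real^'n^'n" and ws :: "nat \<Rightarrow> real^'n"
  assumes rec: "\<And>t. x (Suc t) = A *v x t + B *v u t + F *v ws t + r"
    and ub: "\<And>t. norm (u t) \<le> Ku"
    and dec: "\<And>k i j. \<bar>mp A k $ i $ j\<bar> \<le> c * \<rho> ^ k"
    and c: "0 \<le> c" and \<rho>: "0 < \<rho>" "\<rho> < 1" and Ku: "0 \<le> Ku"
  defines "c1 \<equiv> real CARD('n) * real CARD('n) * c"
    and "nb \<equiv> (\<Sum>i\<in>UNIV. \<Sum>j\<in>UNIV. \<bar>B$i$j\<bar>)"
    and "nf \<equiv> (\<Sum>i\<in>UNIV. \<Sum>j\<in>UNIV. \<bar>F$i$j\<bar>)"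
  shows "(norm (x t))\<^sup>2 \<le> 2 * (c1 * norm (x 0) + c1 * (nb * Ku + norm r) / (1 - \<rho>))\<^sup>2
      + 2 * (c1 * nf / (1 - \<rho>)) * (c1 * nf) * (\<Sum>s<t. \<rho> ^ (t - 1 - s) * (norm (ws s))\<^sup>2)"
proof -
  define K where "K = nb * Ku + norm r"
  define K0 where "K0 = c1 * norm (x 0) + c1 * K / (1 - \<rho>)"
  have c1: "0 \<le> c1" unfolding c1_def using c by simp
  have nb: "0 \<le> nb" unfolding nb_def by (simp add: sum_nonneg)
  have nf: "0 \<le> nf" unfolding nf_def by (simp add: sum_nonneg)
  have K: "0 \<le> K" unfolding K_def using nb Ku by simp
  have K0: "0 \<le> K0" unfolding K0_def using c1 K \<rho> by simp
  have mpb: "norm (mp A k *v y) \<le> c1 * \<rho> ^ k * norm y" for k y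
  proof -
    have "(\<Sum>i\<in>UNIV. \<Sum>j\<in>UNIV. \<bar>mp A k $ i $ j\<bar>) \<le> (\<Sum>i\<in>(UNIV::'n set). \<Sum>j\<in>(UNIV::'n set). c * \<rho> ^ k)"
      by (intro sum_mono dec)
    also have "\<dots> = c1 * \<rho> ^ k" unfolding c1_def by simp
    finally have "(\<Sum>i\<in>UNIV. \<Sum>j\<in>UNIV. \<bar>mp A k $ i $ j\<bar>) \<le> c1 * \<rho> ^ k" .
    thus ?thesis using mat_vec_bound[of "mp A k" y] by (meson mult_right_mono norm_ge_zero order_trans)
  qed
  define v where "v s = B *v u s + F *v ws s + r" for s
  have vb: "norm (v s) \<le> K + nf * norm (ws s)" for s
  proof -
    have "norm (v s) \<le> norm (B *v u s) + norm (F *v ws s) + norm r"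
      unfolding v_def by (meson add_mono norm_triangle_ineq order_trans order_refl)
    also have "norm (B *v u s) \<le> nb * Ku"
      using mat_vec_bound[of B "u s"] ub[of s] nb unfolding nb_def
      by (meson mult_left_mono order_trans)
    also have "norm (F *v ws s) \<le> nf * norm (ws s)"
      using mat_vec_bound[of F "ws s"] unfolding nf_def .
    finally show ?thesis unfolding K_def by simp
  qed
  have xrec: "x (Suc t) = A *v x t + v t" for t unfolding v_def rec by (simp add: add.assoc)
  have xt: "x t = mp A t *v x 0 + (\<Sum>s<t. mp A (t - 1 - s) *v v s)"
    by (rule lin_rec[of x A v, OF xrec])
  define Z where "Z = (\<Sum>s<t. (c1 * nf * \<rho> ^ (t - 1 - s)) * norm (ws s))"
  have Z: "0 \<le> Z" unfolding Z_def using c1 nf \<rho> by (intro sum_nonneg) simp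
  have geo: "(\<Sum>s<t. \<rho> ^ (t - 1 - s)) \<le> 1 / (1 - \<rho>)" using geo_bound \<rho> by simp
  have "norm (x t) \<le> norm (mp A t *v x 0) + (\<Sum>s<t. norm (mp A (t - 1 - s) *v v s))"
    unfolding xt by (rule order_trans[OF norm_triangle_ineq add_left_mono[OF norm_sum]])
  also have "\<dots> \<le> c1 * \<rho> ^ t * norm (x 0) + (\<Sum>s<t. c1 * \<rho> ^ (t - 1 - s) * (K + nf * norm (ws s)))"
  proof (intro add_mono sum_mono)
    show "norm (mp A t *v x 0) \<le> c1 * \<rho> ^ t * norm (x 0)" by (rule mpb)
    fix s
    have "norm (mp A (t - 1 - s) *v v s) \<le> c1 * \<rho> ^ (t - 1 - s) * norm (v s)" by (rule mpb)
    also have "\<dots> \<le> c1 * \<rho> ^ (t - 1 - s) * (K + nf * norm (ws s))"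
      using vb[of s] c1 \<rho> by (intro mult_left_mono) auto
    finally show "norm (mp A (t - 1 - s) *v v s) \<le> c1 * \<rho> ^ (t - 1 - s) * (K + nf * norm (ws s))" .
  qed
  also have "\<dots> = c1 * \<rho> ^ t * norm (x 0) + c1 * K * (\<Sum>s<t. \<rho> ^ (t - 1 - s)) + Z"
    unfolding Z_def by (simp add: algebra_simps sum.distrib sum_distrib_left)
  also have "\<dots> \<le> K0 + Z"
  proof -
    have "c1 * \<rho> ^ t * norm (x 0) \<le> c1 * norm (x 0)"
      using c1 \<rho> by (simp add: mult_left_le_one_le power_le_one mult_right_le_one_le mult.assoc mult_left_mono)
    moreover have "c1 * K * (\<Sum>s<t. \<rho> ^ (t - 1 - s)) \<le> c1 * K * (1 / (1 - \<rho>))"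
      using c1 K geo by (intro mult_left_mono) auto
    ultimately show ?thesis unfolding K0_def by simp
  qed
  finally have xb: "norm (x t) \<le> K0 + Z" .
  have "(norm (x t))\<^sup>2 \<le> (K0 + Z)\<^sup>2" using xb by (simp add: power_mono)
  also have "\<dots> \<le> 2 * K0\<^sup>2 + 2 * Z\<^sup>2" using zero_le_square[of "K0 - Z"] by (simp add: power2_eq_square algebra_simps)
  also have "Z\<^sup>2 \<le> (\<Sum>s<t. c1 * nf * \<rho> ^ (t - 1 - s)) * (\<Sum>s<t. c1 * nf * \<rho> ^ (t - 1 - s) * (norm (ws s))\<^sup>2)"
    unfolding Z_def using c1 nf \<rho> by (intro cs_weighted) simp
  also have "\<dots> \<le> (c1 * nf / (1 - \<rho>)) * ((c1 * nf) * (\<Sum>s<t. \<rho> ^ (t - 1 - s) * (norm (ws s))\<^sup>2))"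
  proof (rule mult_mono)
    show "(\<Sum>s<t. c1 * nf * \<rho> ^ (t - 1 - s)) \<le> c1 * nf / (1 - \<rho>)"
      using geo c1 nf by (simp add: sum_distrib_left[symmetric] mult_left_mono divide_inverse)
    show "(\<Sum>s<t. c1 * nf * \<rho> ^ (t - 1 - s) * (norm (ws s))\<^sup>2) \<le> c1 * nf * (\<Sum>s<t. \<rho> ^ (t - 1 - s) * (norm (ws s))\<^sup>2)"
      by (simp add: sum_distrib_left mult.assoc)
    show "0 \<le> c1 * nf / (1 - \<rho>)" using c1 nf \<rho> by simp
    show "0 \<le> (\<Sum>s<t. c1 * nf * \<rho> ^ (t - 1 - s) * (norm (ws s))\<^sup>2)"
      using c1 nf \<rho> by (intro sum_nonneg) simp
  qed
  finally show ?thesis unfolding K0_def K_def by (simp add: mult.assoc)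
qed

lemma schur_decay:
  fixes A :: "real^'n^'n"
  assumes schur: "schur_stable A"
  shows "\<exists>c \<rho>. 0 \<le> c \<and> 0 < \<rho> \<and> \<rho> < 1 \<and> (\<forall>k i j. \<bar>mp A k $ i $ j\<bar> \<le> c * \<rho> ^ k)"
proof -
  define n where "n = CARD('n)"
  obtain h :: "'n \<Rightarrow> nat" where h: "bij_betw h UNIV {0..<n}"
    using ex_bij_betw_finite_nat[of "UNIV::'n set"] unfolding n_def by auto
  define g where "g = inv_into UNIV h"
  have gh[simp]: "g (h i) = i" for i using h unfolding g_def by (simp add: bij_betw_def)
  have hg[simp]: "a < n \<Longrightarrow> h (g a) = a" for a using h unfolding g_def
    by (metis atLeastLessThan_iff bij_betw_inv_into_right zero_le)
  have hlt[simp]: "h i < n" for i using h by (auto simp: bij_betw_def)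
  have n0: "n > 0" unfolding n_def by simp
  define CA where "CA = Matrix.mat n n (\<lambda>(a,b). complex_of_real (A $ g a $ g b))"
  have CAc: "CA \<in> carrier_mat n n" unfolding CA_def by simp
  have reidx: "(\<Sum>b\<in>{0..<n}. f b) = (\<Sum>j\<in>UNIV. f (h j))" for f :: "nat \<Rightarrow> complex"
    using sum.reindex_bij_betw[OF h, of f] by simp
  have eig: "cmod mu < 1" if e: "eigenvalue CA mu" for mu
  proof -
    obtain v where v: "v \<in> carrier_vec n" "v \<noteq> 0\<^sub>v n" "CA *\<^sub>v v = mu \<cdot>\<^sub>v v"
      using e CAc unfolding eigenvalue_def eigenvector_def by auto
    obtain a where a: "a < n" "v $v a \<noteq> 0"
    proof (rule ccontr)
      assume "\<not> thesis"
      hence "\<forall>a<n. v $v a = 0" using that by blast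
      hence "v = 0\<^sub>v n" using v(1) by (intro eq_vecI) auto
      with v(2) show False by simp
    qed
    define v' :: "complex^'n" where "v' = (\<chi> i. v $v h i)"
    have "v' $ g a = v $v a" unfolding v'_def using a by simp
    hence nz: "v' \<noteq> 0" using a by auto
    have "(\<chi> i. \<Sum>j\<in>UNIV. complex_of_real (A$i$j) * v'$j) = mu *s v'"
    proof (rule Finite_Cartesian_Product.vec_eq_iff[THEN iffD2, OF allI])
      fix i
      have "(CA *\<^sub>v v) $v h i = (mu \<cdot>\<^sub>v v) $v h i" using v by simp
      also have "\<dots> = mu * v $v h i" using v by simp
      finally have 1: "(CA *\<^sub>v v) $v h i = mu * v $v h i" .
      have "(CA *\<^sub>v v) $v h i = (\<Sum>b\<in>{0..<n}. complex_of_real (A $ i $ g b) * v $v b)"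
        using v(1) unfolding CA_def by (simp add: scalar_prod_def)
      also have "\<dots> = (\<Sum>j\<in>UNIV. complex_of_real (A $ i $ j) * v $v h j)"
        by (subst reidx) simp
      finally show "(\<chi> i. \<Sum>j\<in>UNIV. complex_of_real (A$i$j) * v'$j) $ i = (mu *s v') $ i"
        using 1 unfolding v'_def by simp
    qed
    with schur nz show ?thesis unfolding schur_stable_def by blast
  qed
  define r0 where "r0 = spectral_radius CA"
  have r0: "0 \<le> r0" "r0 < 1"
    using spectral_radius_mem_max(1)[OF CAc n0] eig unfolding r0_def spectrum_def by auto
  define l where "l = 2 / (1 + r0)"
  have l: "1 < l" "l * r0 < 1" using r0 unfolding l_def by (auto simp: field_simps)
  define lc where "lc = complex_of_real l"
  have lcnz: "lc \<noteq> 0" using l unfolding lc_def by auto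
  have LCc: "lc \<cdot>\<^sub>m CA \<in> carrier_mat n n" using CAc by simp
  have "spectral_radius (lc \<cdot>\<^sub>m CA) < 1"
  proof -
    obtain mu where mu: "eigenvalue (lc \<cdot>\<^sub>m CA) mu" "spectral_radius (lc \<cdot>\<^sub>m CA) = cmod mu"
      using spectral_radius_mem_max(1)[OF LCc n0] unfolding spectrum_def by auto
    have "eigenvalue CA (mu / lc)" by (rule eig_smult[OF CAc lcnz mu(1)])
    hence "cmod (mu / lc) \<le> r0"
      using spectral_radius_mem_max(2)[OF CAc n0] unfolding r0_def spectrum_def by auto
    hence "cmod mu \<le> l * r0" using l unfolding lc_def by (simp add: norm_divide field_simps)
    thus ?thesis using mu l by simp
  qed
  then obtain c where c: "\<And>k. norm_bound ((lc \<cdot>\<^sub>m CA) ^\<^sub>m k) c"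
    using spectral_radius_jnf_norm_bound_less_1_upper_triangular[OF LCc] by auto
  have rel: "(CA ^\<^sub>m k) $$ (h i, h j) = complex_of_real (mp A k $ i $ j)" for k i j
  proof (induction k arbitrary: i j)
    case 0
    then show ?case using CAc h by (auto simp: bij_betw_def inj_on_def Finite_Cartesian_Product.mat_def)
  next
    case (Suc k)
    have "(CA ^\<^sub>m Suc k) $$ (h i, h j) = (\<Sum>b\<in>{0..<n}. (CA ^\<^sub>m k) $$ (h i, b) * CA $$ (b, h j))"
      using CAc by (simp add: scalar_prod_def)
    also have "\<dots> = (\<Sum>l\<in>UNIV. (CA ^\<^sub>m k) $$ (h i, h l) * CA $$ (h l, h j))"
      by (subst reidx) simp
    also have "\<dots> = (\<Sum>l\<in>UNIV. complex_of_real (mp A k $ i $ l) * complex_of_real (A $ l $ j))"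
      using Suc unfolding CA_def by simp
    also have "\<dots> = complex_of_real (mp A (Suc k) $ i $ j)"
      by (simp add: matrix_matrix_mult_def)
    finally show ?case .
  qed
  have bnd: "\<bar>mp A k $ i $ j\<bar> \<le> c * (1 / l) ^ k" for k i j
  proof -
    have "norm (((lc \<cdot>\<^sub>m CA) ^\<^sub>m k) $$ (h i, h j)) \<le> c"
      using c[of k] CAc unfolding norm_bound_def by simp
    hence "norm (lc ^ k * (CA ^\<^sub>m k) $$ (h i, h j)) \<le> c"
      using smult_pow_mat[OF CAc, of lc k] CAc by simp
    hence "l ^ k * \<bar>mp A k $ i $ j\<bar> \<le> c"
      using l unfolding rel lc_def by (simp add: norm_mult norm_power)
    thus ?thesis using l by (simp add: field_simps power_divide)
  qed
  have c0: "0 \<le> c" using bnd[of 0] by (metis abs_ge_zero order_trans mult_1_right power_0)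
  show ?thesis
    by (rule exI[of _ c], rule exI[of _ "1/l"]) (use c0 l bnd in auto)
qed

theorem proposition4:
  fixes M :: "'a measure"
    and w :: "nat \<Rightarrow> 'a \<Rightarrow> real^'n"
    and A :: "real^'n^'n" and B :: "real^'m^'n" and F :: "real^'n^'n" and r :: "real^'n"
    and x0 :: "real^'n" and N :: nat and Umax \<phi>max :: real
    and \<phi> :: "nat \<Rightarrow> 'n \<Rightarrow> real \<Rightarrow> real"
    and Q :: "nat \<Rightarrow> real^'n^'n" and R :: "nat \<Rightarrow> real^'m^'m"
    and sel :: "real^'n \<Rightarrow> (nat \<Rightarrow> nat \<Rightarrow> real^'n^'m) \<times> (nat \<Rightarrow> real^'m)"
  assumes prob: "prob_space M"
    and w_meas: "\<And>t. w t \<in> borel_measurable M"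
    and w_indep: "prob_space.indep_vars M (\<lambda>_. borel) w UNIV"
    and w_ident: "\<And>t. distr M borel (w t) = distr M borel (w 0)"
    and w_cov: "integrable M (\<lambda>\<omega>. (norm (w 0 \<omega>))\<^sup>2)"
    and N_pos: "N \<ge> 1"
    and Umax_pos: "0 < Umax"
    and phimax: "0 < \<phi>max" "\<phi>max \<le> Umax"
    and phi_bound: "\<And>i j s. i < N \<Longrightarrow> \<bar>\<phi> i j s\<bar> \<le> \<phi>max"
    and phi_meas: "\<And>i j. i < N \<Longrightarrow> \<phi> i j \<in> borel_measurable borel"
    and Q_pd: "\<And>k. k \<le> N \<Longrightarrow> sym_pos_def (Q k)"
    and R_pd: "\<And>k. k < N \<Longrightarrow> sym_pos_def (R k)"
    and sel_opt: "\<And>x. fh_optimal M w N A B F r \<phi> Q R \<phi>max Umax x (fst (sel x)) (snd (sel x))"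
    and schur: "schur_stable A"
    and zero_mean: "\<And>i j. i < N \<Longrightarrow> (\<integral>\<omega>. \<phi> i j ((F *v w i \<omega>) $ j) \<partial>M) = 0"
    and state_meas: "\<And>t. (\<lambda>\<omega>. rhc_state N A B F r \<phi> sel x0 (\<lambda>i. w i \<omega>) t) \<in> borel_measurable M"
  shows "(SUP t. \<integral>\<^sup>+ \<omega>. ennreal ((norm (rhc_state N A B F r \<phi> sel x0 (\<lambda>i. w i \<omega>) t))\<^sup>2) \<partial>M) < \<infinity>"
proof -
  interpret P: prob_space M by (rule prob)
  obtain c \<rho> where c\<rho>: "0 \<le> c" "0 < \<rho>" "\<rho> < 1" "\<And>k i j. \<bar>mp A k $ i $ j\<bar> \<le> c * \<rho> ^ k"
    using schur_decay[OF schur] by blast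
  define Ku where "Ku = real CARD('m) * Umax"
  define c1 where "c1 = real CARD('n) * real CARD('n) * c"
  define nb where "nb = (\<Sum>i\<in>UNIV. \<Sum>j\<in>UNIV. \<bar>B$i$j\<bar>)"
  define nf where "nf = (\<Sum>i\<in>UNIV. \<Sum>j\<in>UNIV. \<bar>F$i$j\<bar>)"
  define C0 where "C0 = 2 * (c1 * norm x0 + c1 * (nb * Ku + norm r) / (1 - \<rho>))\<^sup>2"
  define C1 where "C1 = 2 * (c1 * nf / (1 - \<rho>)) * (c1 * nf)"
  have Ku: "0 \<le> Ku" unfolding Ku_def using Umax_pos by simp
  have c1: "0 \<le> c1" unfolding c1_def using c\<rho> by simp
  have nf: "0 \<le> nf" unfolding nf_def by (simp add: sum_nonneg)
  have C0: "0 \<le> C0" unfolding C0_def by simp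
  have C1: "0 \<le> C1" unfolding C1_def using c1 nf c\<rho> by simp
  have adm: "admissible N \<phi>max Umax (fst (sel x)) (snd (sel x))" for x
    using sel_opt[of x] unfolding fh_optimal_def by blast
  have pw: "(norm (rhc_state N A B F r \<phi> sel x0 (\<lambda>i. w i \<omega>) t))\<^sup>2
      \<le> C0 + C1 * (\<Sum>s<t. \<rho> ^ (t - 1 - s) * (norm (w s \<omega>))\<^sup>2)" for t \<omega>
  proof -
    let ?X = "\<lambda>t. rhc_state N A B F r \<phi> sel x0 (\<lambda>i. w i \<omega>) t"
    let ?u = "uin N A B F r \<phi> sel x0 (\<lambda>i. w i \<omega>)"
    have rec: "\<And>t. ?X (Suc t) = A *v ?X t + B *v ?u t + F *v w t \<omega> + r"
      using rhc_rec[OF N_pos] by blast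
    have ub: "norm (?u t) \<le> Ku" for t
    proof -
      have l: "t mod N < N" using N_pos by simp
      show ?thesis unfolding uin_def Let_def Ku_def
        by (rule input_bound[OF adm l]) (rule phi_bound)
    qed
    have x0: "?X 0 = x0" unfolding rhc_state_def by simp
    show ?thesis
      using traj_bound[of ?X A B ?u F "\<lambda>s. w s \<omega>" r Ku c \<rho> t, OF rec ub c\<rho>(4) c\<rho>(1-3) Ku]
      unfolding x0 C0_def C1_def c1_def nb_def nf_def by simp
  qed
  define E where "E = (\<integral>\<omega>. (norm (w 0 \<omega>))\<^sup>2 \<partial>M)"
  have E: "0 \<le> E" unfolding E_def by simp
  have wi: "integrable M (\<lambda>\<omega>. (norm (w s \<omega>))\<^sup>2) \<and> (\<integral>\<omega>. (norm (w s \<omega>))\<^sup>2 \<partial>M) = E" for s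
  proof -
    have m: "(\<lambda>x::real^'n. (norm x)\<^sup>2) \<in> borel_measurable borel" by measurable
    have "integrable (distr M borel (w 0)) (\<lambda>x. (norm x)\<^sup>2)"
      using integrable_distr_eq[OF w_meas m] w_cov by simp
    hence "integrable (distr M borel (w s)) (\<lambda>x. (norm x)\<^sup>2)" using w_ident[of s] by simp
    hence i: "integrable M (\<lambda>\<omega>. (norm (w s \<omega>))\<^sup>2)"
      using integrable_distr_eq[OF w_meas m] by simp
    have "(\<integral>\<omega>. (norm (w s \<omega>))\<^sup>2 \<partial>M) = integral\<^sup>L (distr M borel (w s)) (\<lambda>x. (norm x)\<^sup>2)"
      using integral_distr[OF w_meas m] by simp
    also have "\<dots> = integral\<^sup>L (distr M borel (w 0)) (\<lambda>x. (norm x)\<^sup>2)" using w_ident[of s] by simp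
    also have "\<dots> = E" unfolding E_def using integral_distr[OF w_meas m] by simp
    finally show ?thesis using i by simp
  qed
  have bnd: "(\<integral>\<^sup>+ \<omega>. ennreal ((norm (rhc_state N A B F r \<phi> sel x0 (\<lambda>i. w i \<omega>) t))\<^sup>2) \<partial>M)
      \<le> ennreal (C0 + C1 * (E / (1 - \<rho>)))" for t
  proof -
    let ?g = "\<lambda>\<omega>. C0 + C1 * (\<Sum>s<t. \<rho> ^ (t - 1 - s) * (norm (w s \<omega>))\<^sup>2)"
    have gi: "integrable M ?g"
      using wi by (intro Bochner_Integration.integrable_add integrable_const integrable_mult_right
          Bochner_Integration.integrable_sum) auto
    have gnn: "0 \<le> ?g \<omega>" for \<omega> using C0 C1 c\<rho> by (intro add_nonneg_nonneg mult_nonneg_nonneg sum_nonneg) auto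
    have "(\<integral>\<^sup>+ \<omega>. ennreal ((norm (rhc_state N A B F r \<phi> sel x0 (\<lambda>i. w i \<omega>) t))\<^sup>2) \<partial>M)
        \<le> (\<integral>\<^sup>+ \<omega>. ennreal (?g \<omega>) \<partial>M)"
      by (intro nn_integral_mono ennreal_leI pw)
    also have "\<dots> = ennreal (integral\<^sup>L M ?g)"
      using gi gnn by (intro nn_integral_eq_integral) auto
    also have "integral\<^sup>L M ?g = C0 + C1 * (\<Sum>s<t. \<rho> ^ (t - 1 - s) * E)"
    proof -
      have "integral\<^sup>L M ?g = integral\<^sup>L M (\<lambda>\<omega>. C0) + integral\<^sup>L M (\<lambda>\<omega>. C1 * (\<Sum>s<t. \<rho> ^ (t - 1 - s) * (norm (w s \<omega>))\<^sup>2))"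
        using wi by (intro Bochner_Integration.integral_add integrable_const integrable_mult_right
          Bochner_Integration.integrable_sum) auto
      also have "integral\<^sup>L M (\<lambda>\<omega>. C0) = C0" by (simp add: P.prob_space)
      also have "integral\<^sup>L M (\<lambda>\<omega>. C1 * (\<Sum>s<t. \<rho> ^ (t - 1 - s) * (norm (w s \<omega>))\<^sup>2))
          = C1 * (\<Sum>s<t. \<rho> ^ (t - 1 - s) * integral\<^sup>L M (\<lambda>\<omega>. (norm (w s \<omega>))\<^sup>2))"
        using wi by (simp add: Bochner_Integration.integral_sum)
      finally show ?thesis using wi by simp
    qed
    also have "C0 + C1 * (\<Sum>s<t. \<rho> ^ (t - 1 - s) * E) \<le> C0 + C1 * (E / (1 - \<rho>))"
    proof -
      have "(\<Sum>s<t. \<rho> ^ (t - 1 - s) * E) = (\<Sum>s<t. \<rho> ^ (t - 1 - s)) * E"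
        by (simp add: sum_distrib_right)
      also have "\<dots> \<le> (1 / (1 - \<rho>)) * E"
        using geo_bound[of \<rho> t] c\<rho> E by (intro mult_right_mono) auto
      finally show ?thesis using C1 by (intro add_left_mono mult_left_mono) auto
    qed
    hence "ennreal (C0 + C1 * (\<Sum>s<t. \<rho> ^ (t - 1 - s) * E)) \<le> ennreal (C0 + C1 * (E / (1 - \<rho>)))"
      by (rule ennreal_leI)
    finally show ?thesis .
  qed
  have "(SUP t. \<integral>\<^sup>+ \<omega>. ennreal ((norm (rhc_state N A B F r \<phi> sel x0 (\<lambda>i. w i \<omega>) t))\<^sup>2) \<partial>M)
      \<le> ennreal (C0 + C1 * (E / (1 - \<rho>)))"
    by (intro SUP_least bnd)
  also have "\<dots> < \<infinity>" by simp
  finally show ?thesis .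
qed

end
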